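(* Let $(G_n)$ be a sequence of graphs with $\min_{v\in V}\delta_v=\omega(\log n)$, let $k\ge3$ be odd, $q\in(1/2,1]$ and $0\le p<p^\star_{k,q}$. Run the $(k,p,\mathcal B)$-Edge-Majority dynamics from the random initial configuration in which each node is $\mathcal R$ with probability $q$, independently. Let $q_0=q$ and $q_{t+1}=F_{p,k}(q_t)$. If $q\in(\varphi^-_{p,k},\mu_{p,k}]$, then there exists $T=T(p,k,q)$ such that $q_T>\mu_{p,k}$, and for all $\gamma>0$, $$\Pr\big(\forall t\le T,\ \forall v\in V:\ \phi_v^{(t)}\in[q_t-\gamma,q_t+\gamma]\big)=1-e^{-\omega(\log n)}.$$
   Context: $G_n=(V,E)$, $V=\{1,\dots,n\}$, $N(u)$ neighbourhood, $\delta_u=|N(u)|$; asymptotics as $n\to\infty$. States in $\{\mathcal R,\mathcal B\}$; $R^{(t)}$ the $\mathcal R$ nodes at round $t$; $\phi_u^{(t)}=|N(u)\cap R^{(t)}|/\delta_u$. $(k,p,\mathcal B)$-Edge-Majority: in each round $t\ge1$ every node $u$ independently samples $k$ neighbours uniformly with replacement; for each sampled $v$, independently, $u$ sees $v$ as $\mathcal B$ with probability $p$ and otherwise sees $v$'s true state at round $t-1$; $u$ adopts the state seen more often. $F_{p,k}(x)=\Pr[\mathrm{Bin}(k,(1-p)x)\ge(k+1)/2]$. $p_k^\star\in[1/9,1/2)$ is the (unique) value such that for $0\le p<p_k^\star$, $F_{p,k}(x)=x$ on $[0,1]$ has exactly three solutions $0<\varphi^-_{p,k}<\varphi^+_{p,k}$;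 for $p=p_k^\star$ exactly two, $0$ and $\varphi_{p,k}$ (set $\varphi^-_{p_k^\star,k}=\varphi_{p_k^\star,k}$); for $p>p_k^\star$ only $0$. $p^\star_{k,q}=\max\{p\in[0,p_k^\star]:\varphi^-_{p,k}\le q\}$. For $0\le p<p_k^\star$, $\mu_{p,k}$ is the unique point of $(\varphi^-_{p,k},\varphi^+_{p,k})$ with $F'_{p,k}(\mu_{p,k})=1$. *)

theory Defs
  imports "HOL-Probability.Probability" "HOL-Library.Landau_Symbols"
begin

text \<open>F_{p,k}(x) = Pr[Bin(k,(1-p)x) >= (k+1)/2], written out as the binomial tail sum.\<close>
definition F :: "real \<Rightarrow> nat \<Rightarrow> real \<Rightarrow> real" where
  "F p k x = (\<Sum>j\<in>{j. j \<le> k \<and> 2 * j \<ge> k + 1}.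
      real (k choose j) * ((1 - p) * x) ^ j * (1 - (1 - p) * x) ^ (k - j))"

definition fixset :: "real \<Rightarrow> nat \<Rightarrow> real set" where
  "fixset p k = {x \<in> {0..1}. F p k x = x}"

definition pk_star :: "nat \<Rightarrow> real" where
  "pk_star k = (THE ps. 1/9 \<le> ps \<and> ps < 1/2
      \<and> (\<forall>p. 0 \<le> p \<and> p < ps \<longrightarrow> card (fixset p k) = 3)
      \<and> card (fixset ps k) = 2
      \<and> (\<forall>p. ps < p \<and> p \<le> 1 \<longrightarrow> fixset p k = {0}))"

text \<open>phi^-: smallest nonzero fixed point (for p = p_k^star this is the unique nonzero one).\<close>
definition phi_minus :: "real \<Rightarrow> nat \<Rightarrow> real" where
  "phi_minus p k = Min (fixset p k - {0})"

definition phi_plus :: "real \<Rightarrow> nat \<Rightarrow> real" where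
  "phi_plus p k = Max (fixset p k)"

definition pkq_star :: "nat \<Rightarrow> real \<Rightarrow> real" where
  "pkq_star k q = (GREATEST p. 0 \<le> p \<and> p \<le> pk_star k \<and> phi_minus p k \<le> q)"

definition mu :: "real \<Rightarrow> nat \<Rightarrow> real" where
  "mu p k = (THE x. phi_minus p k < x \<and> x < phi_plus p k \<and> deriv (F p k) x = 1)"

definition q_seq :: "real \<Rightarrow> nat \<Rightarrow> real \<Rightarrow> nat \<Rightarrow> real" where
  "q_seq p k q t = (F p k ^^ t) q"

text \<open>G n is the adjacency relation of G_n on V = {1..n}.\<close>
definition nbhd :: "(nat \<Rightarrow> nat \<Rightarrow> nat \<Rightarrow> bool) \<Rightarrow> nat \<Rightarrow> nat \<Rightarrow> nat set" where
  "nbhd G n u = {v \<in> {1..n}. G n u v}"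

text \<open>A configuration is the indicator of the set of R nodes.
  One sample: a uniform neighbour v; with prob. p it is seen as B, else its true state.
  Result True = seen as R.\<close>
definition sample_seen :: "nat set \<Rightarrow> real \<Rightarrow> (nat \<Rightarrow> bool) \<Rightarrow> bool pmf" where
  "sample_seen Nu p c = do { v \<leftarrow> pmf_of_set Nu; b \<leftarrow> bernoulli_pmf p; return_pmf (\<not> b \<and> c v) }"

definition node_update :: "nat set \<Rightarrow> nat \<Rightarrow> real \<Rightarrow> (nat \<Rightarrow> bool) \<Rightarrow> bool pmf" where
  "node_update Nu k p c =
     map_pmf (\<lambda>s. 2 * card {i \<in> {..<k}. s i} > k) (Pi_pmf {..<k} False (\<lambda>_. sample_seen Nu p c))"

definition config_step ::
  "(nat \<Rightarrow> nat set) \<Rightarrow> nat set \<Rightarrow> nat \<Rightarrow> real \<Rightarrow> (nat \<Rightarrow> bool) \<Rightarrow> (nat \<Rightarrow> bool) pmf" where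
  "config_step N V k p c = Pi_pmf V False (\<lambda>u. node_update (N u) k p c)"

definition init_config :: "nat set \<Rightarrow> real \<Rightarrow> (nat \<Rightarrow> bool) pmf" where
  "init_config V q = Pi_pmf V False (\<lambda>_. bernoulli_pmf q)"

text \<open>traj N V k p q t: joint law of the configurations at rounds 0..t (list of length t+1).\<close>
primrec traj ::
  "(nat \<Rightarrow> nat set) \<Rightarrow> nat set \<Rightarrow> nat \<Rightarrow> real \<Rightarrow> real \<Rightarrow> nat \<Rightarrow> (nat \<Rightarrow> bool) list pmf" where
  "traj N V k p q 0 = map_pmf (\<lambda>c. [c]) (init_config V q)"
| "traj N V k p q (Suc t) =
     bind_pmf (traj N V k p q t) (\<lambda>cs. map_pmf (\<lambda>c. cs @ [c]) (config_step N V k p (last cs)))"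

definition phi :: "nat set \<Rightarrow> (nat \<Rightarrow> bool) \<Rightarrow> real" where
  "phi Nu c = real (card {w \<in> Nu. c w}) / real (card Nu)"

end

theory Submission
  imports Defs
begin


lemma hoeff_Pi:
  fixes V S :: "'a set" and D :: "'a \<Rightarrow> bool pmf" and \<epsilon> :: real
  assumes V: "finite V" and SV: "S \<subseteq> V" and Sne: "S \<noteq> {}" and e: "\<epsilon> \<ge> 0"
  shows "measure_pmf.prob (Pi_pmf V dflt D)
     {f. \<epsilon> \<le> \<bar>real (card {w\<in>S. f w}) / card S - (\<Sum>w\<in>S. pmf (D w) True) / card S\<bar>}
     \<le> 2 * exp (-2 * \<epsilon>\<^sup>2 * card S)"
proof -
  let ?M = "measure_pmf (Pi_pmf V dflt D)"
  have S: "finite S" using V SV finite_subset by blast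
  have cS: "card S > 0" using S Sne by auto
  have ind: "prob_space.indep_vars ?M (\<lambda>_. borel) (\<lambda>i f. of_bool (f i) :: real) S"
  proof -
    have "prob_space.indep_vars ?M (\<lambda>_. count_space UNIV) (\<lambda>x f. f x) S"
      using prob_space.indep_vars_subset[OF measure_pmf.prob_space_axioms indep_vars_Pi_pmf[OF V] SV] .
    then show ?thesis
      by (rule prob_space.indep_vars_compose2[OF measure_pmf.prob_space_axioms]) auto
  qed
  interpret H: Hoeffding_ineq ?M S "\<lambda>i f. of_bool (f i) :: real" "\<lambda>_. 0" "\<lambda>_. 1"
     "\<Sum>i\<in>S. measure_pmf.expectation (Pi_pmf V dflt D) (\<lambda>f. of_bool (f i) :: real)"
    by unfold_locales (use S ind in auto)
  have ex: "measure_pmf.expectation (Pi_pmf V dflt D) (\<lambda>f. of_bool (f i) :: real) = pmf (D i) True"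
    if "i \<in> S" for i
  proof -
    have "measure_pmf.expectation (Pi_pmf V dflt D) (\<lambda>f. of_bool (f i) :: real)
        = measure_pmf.expectation (map_pmf (\<lambda>f. f i) (Pi_pmf V dflt D)) (\<lambda>b. of_bool b :: real)"
      by simp
    also have "map_pmf (\<lambda>f. f i) (Pi_pmf V dflt D) = D i"
      using Pi_pmf_component[OF V, of i dflt D] that SV by auto
    also have "measure_pmf.expectation (D i) (\<lambda>b. of_bool b :: real) = pmf (D i) True"
      by (simp add: integral_measure_pmf_real[where A="{True, False}"])
    finally show ?thesis .
  qed
  have cnt: "real (card {w\<in>S. f w}) = (\<Sum>i\<in>S. of_bool (f i))" for f :: "'a \<Rightarrow> bool"
    using S by (simp add: sum.If_cases Int_def)
  have "{f. \<epsilon> \<le> \<bar>real (card {w\<in>S. f w}) / card S - (\<Sum>w\<in>S. pmf (D w) True) / card S\<bar>}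
        = {x \<in> space ?M. \<epsilon> * card S \<le> \<bar>(\<Sum>i\<in>S. of_bool (x i)) - (\<Sum>i\<in>S. measure_pmf.expectation (Pi_pmf V dflt D) (\<lambda>f. of_bool (f i) :: real))\<bar>}"
  proof -
    have "(\<Sum>i\<in>S. measure_pmf.expectation (Pi_pmf V dflt D) (\<lambda>f. of_bool (f i) :: real)) = (\<Sum>w\<in>S. pmf (D w) True)"
      using ex by (rule sum.cong[OF refl])
    moreover have "\<epsilon> \<le> \<bar>a / card S - b / card S\<bar> \<longleftrightarrow> \<epsilon> * card S \<le> \<bar>a - b\<bar>" for a b :: real
    proof -
      have "\<bar>a / card S - b / card S\<bar> = \<bar>a - b\<bar> / card S" using cS by (simp add: diff_divide_distrib[symmetric])
      thus ?thesis using cS by (simp add: pos_le_divide_eq)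
    qed
    ultimately show ?thesis by (auto simp: cnt)
  qed
  also have "measure_pmf.prob (Pi_pmf V dflt D) \<dots> \<le> 2 * exp (-2 * (\<epsilon> * card S)\<^sup>2 / (\<Sum>i\<in>S. (1 - 0)\<^sup>2))"
    using H.Hoeffding_ineq_abs_ge[of "\<epsilon> * card S"] e cS by simp
  also have "-2 * (\<epsilon> * card S)\<^sup>2 / (\<Sum>i\<in>S. (1 - 0::real)\<^sup>2) = -2 * \<epsilon>\<^sup>2 * card S"
    using cS by (simp add: power2_eq_square)
  finally show ?thesis .
qed




lemma phi_range: "finite Nu \<Longrightarrow> 0 \<le> phi Nu c \<and> phi Nu c \<le> 1"
  unfolding phi_def by (cases "card Nu = 0") (auto simp: divide_le_eq_1 card_gt_0_iff intro!: card_mono)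

lemma sample_seen_eq:
  assumes "finite Nu" "Nu \<noteq> {}" "0 \<le> p" "p \<le> 1"
  shows "sample_seen Nu p c = bernoulli_pmf ((1 - p) * phi Nu c)"
proof (rule pmf_eqI)
  fix b :: bool
  have ph: "0 \<le> phi Nu c" "phi Nu c \<le> 1" using phi_range assms(1) by auto
  have r: "0 \<le> (1 - p) * phi Nu c" "(1 - p) * phi Nu c \<le> 1"
    using ph assms by (auto simp: mult_le_one)
  have "pmf (sample_seen Nu p c) True = (1 - p) * phi Nu c"
  proof -
    have "pmf (sample_seen Nu p c) True =
       (\<integral>v. pmf (bernoulli_pmf p \<bind> (\<lambda>b. return_pmf (\<not> b \<and> c v))) True \<partial>measure_pmf (pmf_of_set Nu))"
      unfolding sample_seen_def by (simp add: pmf_bind)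
    also have "\<dots> = (\<integral>v. (1 - p) * of_bool (c v) \<partial>measure_pmf (pmf_of_set Nu))"
      using assms by (intro Bochner_Integration.integral_cong refl) (auto simp: pmf_bind)
    also have "\<dots> = (\<Sum>v\<in>Nu. (1 - p) * of_bool (c v)) / card Nu"
      using assms by (simp add: integral_pmf_of_set)
    also have "\<dots> = (1 - p) * phi Nu c"
      using assms(1) by (simp add: phi_def sum_distrib_left[symmetric] sum.If_cases Int_def)
    finally show ?thesis .
  qed
  then show "pmf (sample_seen Nu p c) b = pmf (bernoulli_pmf ((1 - p) * phi Nu c)) b"
    using r by (cases b) (auto simp: pmf_False_conv_True)
qed

lemma node_update_eq:
  assumes "finite Nu" "Nu \<noteq> {}" "0 \<le> p" "p \<le> 1"
  shows "pmf (node_update Nu k p c) True = F p k (phi Nu c)"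
proof -
  let ?r = "(1 - p) * phi Nu c"
  have ph: "0 \<le> phi Nu c" "phi Nu c \<le> 1" using phi_range assms(1) by auto
  have r: "?r \<in> {0..1}"
    using ph assms by (auto simp: mult_le_one)
  have "node_update Nu k p c = map_pmf (\<lambda>s. 2 * card {i \<in> {..<k}. s i} > k) (Pi_pmf {..<k} False (\<lambda>_. bernoulli_pmf ?r))"
    unfolding node_update_def using sample_seen_eq[OF assms] by simp
  also have "\<dots> = map_pmf (\<lambda>j. 2 * j > k) (binomial_pmf k ?r)"
    by (subst binomial_pmf_altdef'[of "{..<k}" k ?r False]) (use r in \<open>simp_all add: pmf.map_comp o_def\<close>)
  finally have e: "node_update Nu k p c = map_pmf (\<lambda>j. 2 * j > k) (binomial_pmf k ?r)" .
  have "pmf (node_update Nu k p c) True = measure_pmf.prob (binomial_pmf k ?r) {j. 2 * j > k}"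
    by (simp add: e pmf_map vimage_def)
  also have "\<dots> = measure_pmf.prob (binomial_pmf k ?r) {j. j \<le> k \<and> 2 * j \<ge> k + 1}"
    using r by (intro measure_eq_AE AE_pmfI) (auto simp: set_pmf_binomial_eq split: if_splits)
  also have "\<dots> = (\<Sum>j\<in>{j. j \<le> k \<and> 2 * j \<ge> k + 1}. pmf (binomial_pmf k ?r) j)"
    by (rule measure_measure_pmf_finite) auto
  also have "\<dots> = F p k (phi Nu c)"
    unfolding F_def using r by (intro sum.cong refl) (auto simp: pmf_binomial)
  finally show ?thesis .
qed




lemma F_prob:
  assumes "0 \<le> p" "p \<le> 1" "0 \<le> x" "x \<le> 1"
  shows "F p k x = measure_pmf.prob (binomial_pmf k ((1 - p) * x)) {j. 2 * j > k}"
proof -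
  let ?r = "(1 - p) * x"
  have r: "?r \<in> {0..1}" using assms by (auto simp: mult_le_one)
  have "measure_pmf.prob (binomial_pmf k ?r) {j. 2 * j > k}
     = measure_pmf.prob (binomial_pmf k ?r) {j. j \<le> k \<and> 2 * j \<ge> k + 1}"
    using r by (intro measure_eq_AE AE_pmfI) (auto simp: set_pmf_binomial_eq split: if_splits)
  also have "\<dots> = (\<Sum>j\<in>{j. j \<le> k \<and> 2 * j \<ge> k + 1}. pmf (binomial_pmf k ?r) j)"
    by (rule measure_measure_pmf_finite) auto
  also have "\<dots> = F p k x"
    unfolding F_def using r by (intro sum.cong refl) (auto simp: pmf_binomial)
  finally show ?thesis by simp
qed

lemma F_range:
  assumes "0 \<le> p" "p \<le> 1" "0 \<le> x" "x \<le> 1"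
  shows "0 \<le> F p k x \<and> F p k x \<le> 1"
  using F_prob[OF assms] by simp

lemma F_cont: "continuous_on A (F p k)"
  unfolding F_def by (intro continuous_intros)

lemma F_unif:
  assumes "\<epsilon> > 0"
  shows "\<exists>\<eta>>0. \<forall>x\<in>{0..1}. \<forall>y\<in>{0..1}. \<bar>x - y\<bar> < \<eta> \<longrightarrow> \<bar>F p k x - F p k y\<bar> < \<epsilon>"
proof -
  have "uniformly_continuous_on {0..1::real} (F p k)"
    by (intro compact_uniformly_continuous F_cont) auto
  then show ?thesis using assms unfolding uniformly_continuous_on_def dist_real_def by metis
qed

lemma q_seq_Suc: "q_seq p k q (Suc t) = F p k (q_seq p k q t)"
  by (simp add: q_seq_def)

lemma q_seq_0: "q_seq p k q 0 = q"
  by (simp add: q_seq_def)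

lemma q_seq_range:
  assumes "0 \<le> p" "p \<le> 1" "0 \<le> q" "q \<le> 1"
  shows "0 \<le> q_seq p k q t \<and> q_seq p k q t \<le> 1"
  by (induction t) (use assms F_range in \<open>auto simp: q_seq_Suc q_seq_0\<close>)

lemma traj_len: "cs \<in> set_pmf (traj N V k p q t) \<Longrightarrow> length cs = Suc t"
  by (induction t arbitrary: cs) auto

definition good :: "(nat \<Rightarrow> nat set) \<Rightarrow> nat set \<Rightarrow> nat \<Rightarrow> real \<Rightarrow> real \<Rightarrow> nat \<Rightarrow> real \<Rightarrow> (nat \<Rightarrow> bool) list \<Rightarrow> bool" where
  "good N V k p q t \<epsilon> cs \<longleftrightarrow> (\<forall>s\<le>t. \<forall>v\<in>V. \<bar>phi (N v) (cs ! s) - q_seq p k q s\<bar> \<le> \<epsilon>)"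

definition okgraph :: "(nat \<Rightarrow> nat set) \<Rightarrow> nat set \<Rightarrow> real \<Rightarrow> bool" where
  "okgraph N V d \<longleftrightarrow> finite V \<and> 0 \<le> d \<and> (\<forall>v\<in>V. N v \<subseteq> V \<and> N v \<noteq> {} \<and> d \<le> card (N v))"

lemma union_bound:
  fixes M :: "'a pmf" and b :: real
  assumes "finite V" "\<And>v. v \<in> V \<Longrightarrow> measure_pmf.prob M (A v) \<le> b"
  shows "measure_pmf.prob M {x. \<exists>v\<in>V. x \<in> A v} \<le> card V * b"
proof -
  have "{x. \<exists>v\<in>V. x \<in> A v} = (\<Union>v\<in>V. A v)" by auto
  then have "measure_pmf.prob M {x. \<exists>v\<in>V. x \<in> A v} \<le> (\<Sum>v\<in>V. measure_pmf.prob M (A v))"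
    using measure_UNION_le[OF assms(1), of A "measure_pmf M"] by simp
  also have "\<dots> \<le> (\<Sum>v\<in>V. b)" by (intro sum_mono assms(2))
  finally show ?thesis by simp
qed

lemma conc_bound:
  assumes ok: "okgraph N V d" and e: "\<epsilon> > 0" and v: "v \<in> V"
  shows "measure_pmf.prob (Pi_pmf V False D)
     {f. \<epsilon> \<le> \<bar>phi (N v) f - (\<Sum>w\<in>N v. pmf (D w) True) / card (N v)\<bar>} \<le> 2 * exp (-2 * \<epsilon>\<^sup>2 * d)"
proof -
  have fin: "finite V" and sub: "N v \<subseteq> V" and ne: "N v \<noteq> {}" and dd: "d \<le> card (N v)"
    using ok v unfolding okgraph_def by auto
  have "measure_pmf.prob (Pi_pmf V False D)
     {f. \<epsilon> \<le> \<bar>phi (N v) f - (\<Sum>w\<in>N v. pmf (D w) True) / card (N v)\<bar>} \<le> 2 * exp (-2 * \<epsilon>\<^sup>2 * card (N v))"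
    using hoeff_Pi[OF fin sub ne, of \<epsilon> False D] e unfolding phi_def by simp
  also have "\<dots> \<le> 2 * exp (-2 * \<epsilon>\<^sup>2 * d)"
    using dd e by (simp add: mult_left_mono)
  finally show ?thesis .
qed




lemma step_bound:
  assumes ok: "okgraph N V d" and p: "0 \<le> p" "p \<le> 1" and e: "\<epsilon> > 0"
    and h\<eta>: "\<forall>x\<in>{0..1}. \<forall>y\<in>{0..1}. \<bar>x - y\<bar> < \<eta> \<longrightarrow> \<bar>F p k x - F p k y\<bar> < \<epsilon> / 2"
    and x0: "0 \<le> x0" "x0 \<le> 1"
    and c: "\<forall>u\<in>V. \<bar>phi (N u) c - x0\<bar> < \<eta>"
  shows "measure_pmf.prob (config_step N V k p c) {c'. \<exists>v\<in>V. \<epsilon> < \<bar>phi (N v) c' - F p k x0\<bar>}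
     \<le> card V * (2 * exp (-2 * (\<epsilon>/2)\<^sup>2 * d))"
proof -
  have fin: "finite V" using ok by (simp add: okgraph_def)
  let ?D = "\<lambda>u. node_update (N u) k p c"
  let ?A = "\<lambda>v. {f. \<epsilon>/2 \<le> \<bar>phi (N v) f - (\<Sum>w\<in>N v. pmf (?D w) True) / card (N v)\<bar>}"
  have avg: "\<bar>(\<Sum>w\<in>N v. pmf (?D w) True) / card (N v) - F p k x0\<bar> < \<epsilon>/2" if v: "v \<in> V" for v
  proof -
    have sub: "N v \<subseteq> V" and ne: "N v \<noteq> {}" using ok v by (auto simp: okgraph_def)
    have finN: "finite (N v)" using sub fin finite_subset by blast
    have cN: "card (N v) > 0" using finN ne by (simp add: card_gt_0_iff)
    have pw: "pmf (?D w) True = F p k (phi (N w) c)" if w: "w \<in> N v" for w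
    proof -
      have "w \<in> V" using w sub by auto
      then have "N w \<subseteq> V" "N w \<noteq> {}" using ok by (auto simp: okgraph_def)
      then show ?thesis using node_update_eq[of "N w" p k c] fin p finite_subset by blast
    qed
    have "(\<Sum>w\<in>N v. pmf (?D w) True) / card (N v) - F p k x0
        = (\<Sum>w\<in>N v. F p k (phi (N w) c) - F p k x0) / card (N v)"
      using cN by (simp add: pw sum_subtractf field_simps)
    also have "\<bar>\<dots>\<bar> \<le> (\<Sum>w\<in>N v. \<bar>F p k (phi (N w) c) - F p k x0\<bar>) / card (N v)"
      using cN by (simp add: divide_right_mono sum_abs)
    also have "\<dots> < (\<Sum>w\<in>N v. \<epsilon>/2) / card (N v)"
    proof -
      have "(\<Sum>w\<in>N v. \<bar>F p k (phi (N w) c) - F p k x0\<bar>) < (\<Sum>w\<in>N v. \<epsilon>/2)"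
      proof (rule sum_strict_mono[OF finN ne])
        fix w assume w: "w \<in> N v"
        then have wV: "w \<in> V" using sub by auto
        then have "finite (N w)" using ok fin finite_subset by (auto simp: okgraph_def)
        then have "phi (N w) c \<in> {0..1}" using phi_range by auto
        then show "\<bar>F p k (phi (N w) c) - F p k x0\<bar> < \<epsilon>/2"
          using h\<eta> c wV x0 by auto
      qed
      then show ?thesis using cN by (intro divide_strict_right_mono) auto
    qed
    also have "\<dots> = \<epsilon>/2" using cN by simp
    finally show ?thesis .
  qed
  have "{c'. \<exists>v\<in>V. \<epsilon> < \<bar>phi (N v) c' - F p k x0\<bar>} \<subseteq> {f. \<exists>v\<in>V. f \<in> ?A v}"
  proof safe
    fix f v assume v: "v \<in> V" and l: "\<epsilon> < \<bar>phi (N v) f - F p k x0\<bar>"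
    have "\<epsilon>/2 \<le> \<bar>phi (N v) f - (\<Sum>w\<in>N v. pmf (?D w) True) / card (N v)\<bar>"
      using avg[OF v] l by linarith
    then show "\<exists>v\<in>V. f \<in> ?A v" using v by blast
  qed
  then have "measure_pmf.prob (config_step N V k p c) {c'. \<exists>v\<in>V. \<epsilon> < \<bar>phi (N v) c' - F p k x0\<bar>}
      \<le> measure_pmf.prob (config_step N V k p c) {f. \<exists>v\<in>V. f \<in> ?A v}"
    by (rule measure_pmf.finite_measure_mono) auto
  also have "\<dots> \<le> card V * (2 * exp (-2 * (\<epsilon>/2)\<^sup>2 * d))"
    unfolding config_step_def
  proof (rule union_bound[OF fin])
    fix v assume "v \<in> V"
    show "measure_pmf.prob (Pi_pmf V False ?D) (?A v) \<le> 2 * exp (-2 * (\<epsilon>/2)\<^sup>2 * d)"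
      by (rule conc_bound[OF ok _ \<open>v \<in> V\<close>]) (use e in simp)
  qed
  finally show ?thesis .
qed




lemma traj_bound:
  assumes p: "0 \<le> p" "p \<le> 1" and q: "0 \<le> q" "q \<le> 1"
  shows "\<epsilon> > 0 \<Longrightarrow> \<exists>a>0. \<forall>N V d. okgraph N V d \<longrightarrow>
     measure_pmf.prob (traj N V k p q t) {cs. \<not> good N V k p q t \<epsilon> cs} \<le> real (Suc t) * (card V * (2 * exp (-a * d)))"
proof (induction t arbitrary: \<epsilon>)
  case 0
  show ?case
  proof (intro exI[of _ "2 * \<epsilon>\<^sup>2"] conjI allI impI)
    show "2 * \<epsilon>\<^sup>2 > 0" using 0 by simp
    fix N V d assume ok: "okgraph N V d"
    have fin: "finite V" using ok by (simp add: okgraph_def)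
    have "measure_pmf.prob (traj N V k p q 0) {cs. \<not> good N V k p q 0 \<epsilon> cs}
        = measure_pmf.prob (init_config V q) {c. \<exists>v\<in>V. \<epsilon> < \<bar>phi (N v) c - q\<bar>}"
      by (simp add: good_def q_seq_0 vimage_def not_le)
    also have "\<dots> \<le> measure_pmf.prob (init_config V q)
        {f. \<exists>v\<in>V. f \<in> {f. \<epsilon> \<le> \<bar>phi (N v) f - (\<Sum>w\<in>N v. pmf ((\<lambda>_. bernoulli_pmf q) w) True) / card (N v)\<bar>}}"
    proof (rule measure_pmf.finite_measure_mono)
      show "{c. \<exists>v\<in>V. \<epsilon> < \<bar>phi (N v) c - q\<bar>} \<subseteq> {f. \<exists>v\<in>V. f \<in> {f. \<epsilon> \<le> \<bar>phi (N v) f - (\<Sum>w\<in>N v. pmf ((\<lambda>_. bernoulli_pmf q) w) True) / card (N v)\<bar>}}"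
      proof safe
        fix c v assume v: "v \<in> V" and l: "\<epsilon> < \<bar>phi (N v) c - q\<bar>"
        have ne: "N v \<noteq> {}" using ok v by (auto simp: okgraph_def)
        have finN: "finite (N v)" using ok v fin finite_subset by (auto simp: okgraph_def)
        have "(\<Sum>w\<in>N v. pmf ((\<lambda>_. bernoulli_pmf q) w) True) / card (N v) = q"
          using q ne finN by simp
        then show "\<exists>v\<in>V. c \<in> {f. \<epsilon> \<le> \<bar>phi (N v) f - (\<Sum>w\<in>N v. pmf ((\<lambda>_. bernoulli_pmf q) w) True) / card (N v)\<bar>}"
        proof (intro bexI[OF _ v])
          show "c \<in> {f. \<epsilon> \<le> \<bar>phi (N v) f - (\<Sum>w\<in>N v. pmf ((\<lambda>_. bernoulli_pmf q) w) True) / card (N v)\<bar>}"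
            using l \<open>(\<Sum>w\<in>N v. pmf ((\<lambda>_. bernoulli_pmf q) w) True) / card (N v) = q\<close> by simp
        qed
      qed
    qed auto
    also have "\<dots> \<le> card V * (2 * exp (-2 * \<epsilon>\<^sup>2 * d))"
      unfolding init_config_def
    proof (rule union_bound[OF fin])
      fix v assume "v \<in> V"
      show "measure_pmf.prob (Pi_pmf V False (\<lambda>_. bernoulli_pmf q))
         {f. \<epsilon> \<le> \<bar>phi (N v) f - (\<Sum>w\<in>N v. pmf ((\<lambda>_. bernoulli_pmf q) w) True) / card (N v)\<bar>}
         \<le> 2 * exp (-2 * \<epsilon>\<^sup>2 * d)"
        by (rule conc_bound[OF ok 0 \<open>v \<in> V\<close>])
    qed
    finally show "measure_pmf.prob (traj N V k p q 0) {cs. \<not> good N V k p q 0 \<epsilon> cs}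
        \<le> real (Suc 0) * (card V * (2 * exp (-(2 * \<epsilon>\<^sup>2) * d)))" by simp
  qed
next
  case (Suc t)
  obtain \<eta> where \<eta>: "\<eta> > 0" "\<forall>x\<in>{0..1}. \<forall>y\<in>{0..1}. \<bar>x - y\<bar> < \<eta> \<longrightarrow> \<bar>F p k x - F p k y\<bar> < \<epsilon> / 2"
    using F_unif[of "\<epsilon>/2" p k] Suc.prems by auto
  define \<eta>' where "\<eta>' = min \<epsilon> (\<eta>/2)"
  have \<eta>': "\<eta>' > 0" "\<eta>' \<le> \<epsilon>" "\<eta>' < \<eta>" using \<eta> Suc.prems by (auto simp: \<eta>'_def)
  obtain a0 where a0: "a0 > 0" "\<forall>N V d. okgraph N V d \<longrightarrow>
     measure_pmf.prob (traj N V k p q t) {cs. \<not> good N V k p q t \<eta>' cs} \<le> real (Suc t) * (card V * (2 * exp (-a0 * d)))"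
    using Suc.IH[OF \<eta>'(1)] by blast
  define a where "a = min a0 (2 * (\<epsilon>/2)\<^sup>2)"
  have a: "a > 0" "a \<le> a0" "a \<le> 2 * (\<epsilon>/2)\<^sup>2" using a0 Suc.prems by (auto simp: a_def)
  show ?case
  proof (intro exI[of _ a] conjI allI impI)
    show "a > 0" by fact
    fix N V d assume ok: "okgraph N V d"
    have d0: "0 \<le> d" using ok by (simp add: okgraph_def)
    define K where "K = card V * (2 * exp (-2 * (\<epsilon>/2)\<^sup>2 * d))"
    define B0 where "B0 = {cs. \<not> good N V k p q t \<eta>' cs}"
    let ?B = "{cs. \<not> good N V k p q (Suc t) \<epsilon> cs}"
    have pw: "emeasure (map_pmf (\<lambda>c. cs @ [c]) (config_step N V k p (last cs))) ?B \<le> ennreal (indicator B0 cs + K)"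
      if cs: "cs \<in> set_pmf (traj N V k p q t)" for cs
    proof (cases "cs \<in> B0")
      case True
      have "K \<ge> 0" by (simp add: K_def)
      then have "ennreal 1 \<le> ennreal (indicator B0 cs + K)" using True by (intro ennreal_leI) simp
      moreover have "emeasure (map_pmf (\<lambda>c. cs @ [c]) (config_step N V k p (last cs))) ?B \<le> ennreal 1"
        by (simp add: measure_pmf.emeasure_eq_measure)
      ultimately show ?thesis by order
    next
      case False
      have len: "length cs = Suc t" using traj_len[OF cs] .
      have g: "good N V k p q t \<eta>' cs" using False by (simp add: B0_def)
      have nth: "(cs @ [c]) ! s = (if s = Suc t then c else cs ! s)" if "s \<le> Suc t" for s c
        using that len by (auto simp: nth_append)
      have lst: "last cs = cs ! t" using len by (metis diff_Suc_1 last_conv_nth list.size(3) nat.distinct(1))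
      have "(\<lambda>c. cs @ [c]) -` ?B \<subseteq> {c'. \<exists>v\<in>V. \<epsilon> < \<bar>phi (N v) c' - F p k (q_seq p k q t)\<bar>}"
      proof safe
        fix c assume ng: "\<not> good N V k p q (Suc t) \<epsilon> (cs @ [c])"
        then obtain s v where s: "s \<le> Suc t" "v \<in> V" and bad: "\<bar>phi (N v) ((cs @ [c]) ! s) - q_seq p k q s\<bar> > \<epsilon>"
          unfolding good_def by (auto simp: not_le)
        show "\<exists>v\<in>V. \<epsilon> < \<bar>phi (N v) c - F p k (q_seq p k q t)\<bar>"
        proof (cases "s = Suc t")
          case True
          then show ?thesis using bad s by (auto simp: nth q_seq_Suc)
        next
          case False
          then have "s \<le> t" using s by simp
          then have "\<bar>phi (N v) (cs ! s) - q_seq p k q s\<bar> \<le> \<eta>'" using g s unfolding good_def by auto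
          moreover have "(cs @ [c]) ! s = cs ! s" using nth[OF s(1)] False by simp
          ultimately show ?thesis using bad \<eta>' by auto
        qed
      qed
      then have "measure_pmf.prob (map_pmf (\<lambda>c. cs @ [c]) (config_step N V k p (last cs))) ?B
          \<le> measure_pmf.prob (config_step N V k p (last cs)) {c'. \<exists>v\<in>V. \<epsilon> < \<bar>phi (N v) c' - F p k (q_seq p k q t)\<bar>}"
        by (simp add: measure_pmf.finite_measure_mono)
      also have "\<dots> \<le> K"
        unfolding K_def
      proof (rule step_bound[OF ok p Suc.prems \<eta>(2)])
        show "0 \<le> q_seq p k q t" "q_seq p k q t \<le> 1" using q_seq_range[OF p q] by auto
        show "\<forall>u\<in>V. \<bar>phi (N u) (last cs) - q_seq p k q t\<bar> < \<eta>"
          using g \<eta>' unfolding good_def lst by force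
      qed
      finally show ?thesis using False
        by (simp add: measure_pmf.emeasure_eq_measure ennreal_leI)
    qed
    have "ennreal (measure_pmf.prob (traj N V k p q (Suc t)) ?B) = emeasure (traj N V k p q (Suc t)) ?B"
      by (simp add: measure_pmf.emeasure_eq_measure)
    also have "\<dots> = (\<integral>\<^sup>+cs. emeasure (map_pmf (\<lambda>c. cs @ [c]) (config_step N V k p (last cs))) ?B \<partial>traj N V k p q t)"
      by simp
    also have "\<dots> \<le> (\<integral>\<^sup>+cs. ennreal (indicator B0 cs + K) \<partial>traj N V k p q t)"
      by (intro nn_integral_mono_AE AE_pmfI pw)
    also have "\<dots> = (\<integral>\<^sup>+cs. ennreal (indicator B0 cs) + ennreal K \<partial>traj N V k p q t)"
      using d0 by (intro nn_integral_cong) (auto simp: K_def ennreal_plus)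
    also have "\<dots> = emeasure (traj N V k p q t) B0 + ennreal K"
      by (subst nn_integral_add) (auto simp: measure_pmf.emeasure_space_1 ennreal_indicator)
    also have "\<dots> = ennreal (measure_pmf.prob (traj N V k p q t) B0 + K)"
      by (simp add: measure_pmf.emeasure_eq_measure K_def ennreal_plus)
    finally have "measure_pmf.prob (traj N V k p q (Suc t)) ?B \<le> measure_pmf.prob (traj N V k p q t) B0 + K"
      by (subst (asm) ennreal_le_iff) (auto simp: K_def)
    also have "\<dots> \<le> real (Suc t) * (card V * (2 * exp (-a0 * d))) + K"
      using a0(2) ok by (simp add: B0_def)
    also have "\<dots> \<le> real (Suc t) * (card V * (2 * exp (-a * d))) + card V * (2 * exp (-a * d))"
    proof (intro add_mono mult_left_mono)
      show "exp (-a0 * d) \<le> exp (-a * d)" using a d0 by (simp add: mult_right_mono)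
      show "K \<le> card V * (2 * exp (-a * d))" unfolding K_def
        using a d0 by (intro mult_left_mono) (auto simp: mult_right_mono)
    qed auto
    also have "\<dots> = real (Suc (Suc t)) * (card V * (2 * exp (-a * d)))"
      by (simp add: algebra_simps)
    finally show "measure_pmf.prob (traj N V k p q (Suc t)) ?B \<le> real (Suc (Suc t)) * (card V * (2 * exp (-a * d)))" .
  qed
qed




lemma conc_main:
  fixes G :: "nat \<Rightarrow> nat \<Rightarrow> nat \<Rightarrow> bool"
  assumes mindeg: "(\<lambda>n. real (Min ((\<lambda>v. card (nbhd G n v)) ` {1..n}))) \<in> \<omega>(\<lambda>n. ln (real n))"
    and p: "0 \<le> p" "p \<le> 1" and q: "0 \<le> q" "q \<le> 1" and \<gamma>: "\<gamma> > 0"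
  shows "\<exists>h. h \<in> \<omega>(\<lambda>n. ln (real n)) \<and>
              (\<forall>\<^sub>F n in at_top.
                 measure_pmf.prob (traj (nbhd G n) {1..n} k p q T)
                   {cs. \<forall>t\<le>T. \<forall>v\<in>{1..n}.
                          q_seq p k q t - \<gamma> \<le> phi (nbhd G n v) (cs ! t) \<and>
                          phi (nbhd G n v) (cs ! t) \<le> q_seq p k q t + \<gamma>}
                 \<ge> 1 - exp (- h n))"
proof -
  define \<delta> where "\<delta> n = real (Min ((\<lambda>v. card (nbhd G n v)) ` {1..n}))" for n
  obtain a where a: "a > 0" and ab: "\<forall>N V d. okgraph N V d \<longrightarrow>
     measure_pmf.prob (traj N V k p q T) {cs. \<not> good N V k p q T \<gamma> cs} \<le> real (Suc T) * (card V * (2 * exp (-a * d)))"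
    using traj_bound[OF p q \<gamma>, of k T] by blast
  define C where "C = 2 * real (Suc T)"
  have C: "C \<ge> 1" by (simp add: C_def)
  define h where "h n = a * \<delta> n - ln (C * real n)" for n
  have ev_ln: "\<forall>\<^sub>F n in at_top. ln (real n) \<ge> max 1 (ln C)"
  proof -
    have "filterlim (\<lambda>n::nat. ln (real n)) at_top at_top"
      by (intro filterlim_compose[OF ln_at_top] filterlim_real_sequentially)
    then have "\<forall>\<^sub>F n in at_top. ln (real n) \<ge> max 1 (ln C)" unfolding filterlim_at_top by blast
    then show ?thesis .
  qed
  have hom: "h \<in> \<omega>(\<lambda>n. ln (real n))"
    unfolding smallomega_def
  proof (safe)
    fix c :: real assume c: "c > 0"
    have e1: "\<forall>\<^sub>F n in at_top. norm (\<delta> n) \<ge> ((c + 2) / a) * norm (ln (real n))"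
      using mindeg unfolding \<delta>_def by (rule smallomegaD)
    show "\<forall>\<^sub>F n in at_top. norm (h n) \<ge> c * norm (ln (real n))"
      using e1 ev_ln eventually_ge_at_top[of 1]
    proof eventually_elim
      case (elim n)
      have l1: "ln (real n) \<ge> 1" "ln (real n) \<ge> ln C" using elim by auto
      have dn: "\<delta> n \<ge> 0" by (simp add: \<delta>_def)
      have "a * \<delta> n \<ge> (c + 2) * ln (real n)"
        using elim(1) l1 dn a by (simp add: field_simps)
      moreover have "ln (C * real n) = ln C + ln (real n)"
        using C elim(3) by (simp add: ln_mult)
      ultimately have "h n \<ge> c * ln (real n)" using l1 by (simp add: h_def algebra_simps)
      moreover have "c * ln (real n) \<ge> 0" using c l1 by simp
      ultimately show ?case using l1 by simp
    qed
  qed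
  have ev: "\<forall>\<^sub>F n in at_top. \<delta> n \<ge> 1"
  proof -
    have "\<forall>\<^sub>F n in at_top. norm (\<delta> n) \<ge> 1 * norm (ln (real n))"
      using mindeg unfolding \<delta>_def by (rule smallomegaD)
    then show ?thesis using ev_ln by eventually_elim (auto simp: \<delta>_def)
  qed
  show ?thesis
  proof (intro exI[of _ h] conjI hom)
    show "\<forall>\<^sub>F n in at_top.
                 measure_pmf.prob (traj (nbhd G n) {1..n} k p q T)
                   {cs. \<forall>t\<le>T. \<forall>v\<in>{1..n}.
                          q_seq p k q t - \<gamma> \<le> phi (nbhd G n v) (cs ! t) \<and>
                          phi (nbhd G n v) (cs ! t) \<le> q_seq p k q t + \<gamma>}
                 \<ge> 1 - exp (- h n)"
      using ev eventually_ge_at_top[of 1]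
    proof eventually_elim
      case (elim n)
      have ok: "okgraph (nbhd G n) {1..n} (\<delta> n)"
        unfolding okgraph_def
      proof (intro conjI ballI)
        show "0 \<le> \<delta> n" by (simp add: \<delta>_def)
        fix v assume v: "v \<in> {1..n}"
        show "nbhd G n v \<subseteq> {1..n}" by (auto simp: nbhd_def)
        show dl: "\<delta> n \<le> card (nbhd G n v)" unfolding \<delta>_def using v by (intro of_nat_mono Min_le) auto
        show "nbhd G n v \<noteq> {}" using dl elim by auto
      qed simp
      let ?E = "{cs. \<forall>t\<le>T. \<forall>v\<in>{1..n}.
                          q_seq p k q t - \<gamma> \<le> phi (nbhd G n v) (cs ! t) \<and>
                          phi (nbhd G n v) (cs ! t) \<le> q_seq p k q t + \<gamma>}"
      have E: "?E = {cs. good (nbhd G n) {1..n} k p q T \<gamma> cs}"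
        by (auto simp: good_def abs_le_iff algebra_simps)
      have "measure_pmf.prob (traj (nbhd G n) {1..n} k p q T) ?E
          = 1 - measure_pmf.prob (traj (nbhd G n) {1..n} k p q T) {cs. \<not> good (nbhd G n) {1..n} k p q T \<gamma> cs}"
        unfolding E by (subst measure_pmf.prob_compl[symmetric]) (auto intro!: arg_cong[where f="measure_pmf.prob _"])
      moreover have "measure_pmf.prob (traj (nbhd G n) {1..n} k p q T) {cs. \<not> good (nbhd G n) {1..n} k p q T \<gamma> cs}
          \<le> real (Suc T) * (real n * (2 * exp (-a * \<delta> n)))"
        using ab ok by fastforce
      moreover have "real (Suc T) * (real n * (2 * exp (-a * \<delta> n))) = exp (- h n)"
      proof -
        have "exp (ln (C * real n)) = C * real n" using elim C by (intro exp_ln) simp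
        then show ?thesis by (simp add: h_def exp_diff exp_minus C_def field_simps)
      qed
      ultimately show ?case by linarith
    qed
  qed
qed




definition Gf :: "nat \<Rightarrow> real \<Rightarrow> real" where "Gf k y = F 0 k y"
definition Gd :: "nat \<Rightarrow> real \<Rightarrow> real" where
  "Gd k y = real k * real ((k - 1) choose (k div 2)) * (y * (1 - y)) ^ (k div 2)"

lemma F_G: "F p k x = Gf k ((1 - p) * x)"
  by (simp add: F_def Gf_def)

lemma Sset: "odd k \<Longrightarrow> {j. j \<le> k \<and> 2 * j \<ge> k + 1} = {Suc (k div 2)..<Suc k}"
  by (auto elim!: oddE)

lemma G_deriv_raw:
  "(Gf k has_real_derivative (\<Sum>j\<in>{j. j \<le> k \<and> 2 * j \<ge> k + 1}.
      real (k choose j) * (real j * y ^ (j - 1) * (1 - y) ^ (k - j)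
        - y ^ j * (real (k - j) * (1 - y) ^ (k - j - 1))))) (at y)"
  unfolding Gf_def F_def
  apply (simp only: diff_zero mult_1)
  apply (rule DERIV_sum)
  apply (rule derivative_eq_intros refl | simp)+
  apply (simp add: algebra_simps)
  done

lemma G_deriv:
  assumes k: "odd k"
  shows "(Gf k has_real_derivative Gd k y) (at y)"
proof -
  define m where "m = k div 2"
  have km: "k = Suc (2 * m)" using k by (auto simp: m_def elim!: oddE)
  define a where "a i = real k * real ((k - 1) choose i) * y ^ i * (1 - y) ^ (k - 1 - i)" for i
  have termeq: "real (k choose j) * (real j * y ^ (j - 1) * (1 - y) ^ (k - j)
        - y ^ j * (real (k - j) * (1 - y) ^ (k - j - 1))) = a (j - 1) - a j"
    if j: "Suc m \<le> j" "j \<le> k" for j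
  proof -
    have j0: "0 < j" using j by simp
    have e1: "real (k choose j) * real j = real k * real ((k - 1) choose (j - 1))"
      using times_binomial_minus1_eq[OF j0, of k] by (metis mult.commute of_nat_mult)
    have e2: "real (k choose j) * real (k - j) = real k * real ((k - 1) choose j)"
      using binomial_absorb_comp[of k j] by (metis mult.commute of_nat_mult)
    have x1: "k - 1 - (j - 1) = k - j" using j by simp
    have x2: "k - j - 1 = k - 1 - j" by simp
    have h1: "real (k choose j) * (real j * y ^ (j - 1) * (1 - y) ^ (k - j)) = a (j - 1)"
      unfolding a_def x1 e1[symmetric] by (simp add: mult_ac)
    have h2: "real (k choose j) * (y ^ j * (real (k - j) * (1 - y) ^ (k - j - 1))) = a j"
      unfolding a_def x2 e2[symmetric] by (simp add: mult_ac)
    show ?thesis using h1 h2 by (simp add: right_diff_distrib)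
  qed
  have "(\<Sum>j\<in>{j. j \<le> k \<and> 2 * j \<ge> k + 1}.
      real (k choose j) * (real j * y ^ (j - 1) * (1 - y) ^ (k - j)
        - y ^ j * (real (k - j) * (1 - y) ^ (k - j - 1)))) = (\<Sum>j\<in>{Suc m..<Suc k}. a (j - 1) - a j)"
    unfolding Sset[OF k] m_def[symmetric] by (intro sum.cong refl termeq) auto
  also have "\<dots> = (\<Sum>i\<in>{m..<k}. a i - a (Suc i))"
    using sum.shift_bounds_Suc_ivl[of "\<lambda>j. a (j - 1) - a j" m k] by simp
  also have "\<dots> = - (\<Sum>i\<in>{m..<k}. a (Suc i) - a i)"
    by (simp add: sum_negf[symmetric])
  also have "\<dots> = a m - a k"
    using km by (subst sum_Suc_diff') auto
  also have "a k = 0" by (simp add: a_def km)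
  also have "a m - 0 = Gd k y"
    unfolding a_def Gd_def m_def[symmetric] using km by (simp add: power_mult_distrib)
  finally show ?thesis using G_deriv_raw[of k y] by simp
qed




lemma G0: "odd k \<Longrightarrow> Gf k 0 = 0"
  unfolding Gf_def F_def by (intro sum.neutral) auto

lemma G1: assumes "odd k" shows "Gf k 1 = 1"
proof -
  have "Gf k 1 = (\<Sum>j\<in>{Suc (k div 2)..<Suc k}. real (k choose j) * 1 ^ j * (1 - 1) ^ (k - j))"
    unfolding Gf_def F_def Sset[OF assms] by simp
  also have "\<dots> = (\<Sum>j\<in>{Suc (k div 2)..<k}. real (k choose j) * 1 ^ j * (1 - 1) ^ (k - j)) + 1"
    using assms by (subst sum.op_ivl_Suc) (auto elim!: oddE)
  also have "(\<Sum>j\<in>{Suc (k div 2)..<k}. real (k choose j) * 1 ^ j * (1 - 1) ^ (k - j)) = 0"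
    by (intro sum.neutral) auto
  finally show ?thesis by simp
qed

lemma G_range: "0 \<le> y \<Longrightarrow> y \<le> 1 \<Longrightarrow> 0 \<le> Gf k y \<and> Gf k y \<le> 1"
  unfolding Gf_def using F_range[of 0 y k] by simp

lemma G_cont: "continuous_on A (Gf k)"
  unfolding Gf_def by (rule F_cont)

lemma G_isCont: "isCont (Gf k) y"
  using G_cont[of UNIV k] by (simp add: continuous_on_eq_continuous_at)

lemma Gd_sym: "Gd k (1 - y) = Gd k y"
  unfolding Gd_def by (simp add: mult.commute)

lemma G_sym: assumes k: "odd k" shows "Gf k y + Gf k (1 - y) = 1"
proof -
  have d: "((\<lambda>y. Gf k y + Gf k (1 - y)) has_real_derivative 0) (at y)" for y
  proof -
    have "((\<lambda>y. Gf k y + Gf k (1 - y)) has_real_derivative Gd k y + Gd k (1 - y) * (- 1)) (at y)"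
      by (intro derivative_intros DERIV_chain2[OF G_deriv[OF k]] G_deriv[OF k]) (auto intro!: derivative_eq_intros)
    then show ?thesis by (simp add: Gd_sym)
  qed
  have "Gf k y + Gf k (1 - y) = Gf k 0 + Gf k (1 - 0)"
    using DERIV_isconst_all[of "\<lambda>y. Gf k y + Gf k (1 - y)" y 0] d by blast
  then show ?thesis using G0[OF k] G1[OF k] by simp
qed

lemma G_half: "odd k \<Longrightarrow> Gf k (1/2) = 1/2"
  using G_sym[of k "1/2"] by simp

lemma Gd_pos: assumes "odd k" "0 < y" "y < 1" shows "Gd k y > 0"
proof -
  have "k div 2 \<le> k - 1" using assms(1) by (auto elim!: oddE)
  then have "((k - 1) choose (k div 2)) > 0" by simp
  moreover have "k > 0" using assms(1) by (auto elim!: oddE)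
  ultimately show ?thesis unfolding Gd_def using assms by simp
qed

lemma Gd_nonneg: assumes "0 \<le> y" "y \<le> 1" shows "Gd k y \<ge> 0"
  unfolding Gd_def using assms by simp

lemma s_mono1: fixes y1 y2 :: real assumes "0 \<le> y1" "y1 < y2" "y2 \<le> 1/2"
  shows "y1 * (1 - y1) < y2 * (1 - y2)"
proof -
  have "y2 * (1 - y2) - y1 * (1 - y1) = (y2 - y1) * (1 - y1 - y2)" by (simp add: algebra_simps)
  moreover have "(y2 - y1) * (1 - y1 - y2) > 0" using assms by (intro mult_pos_pos) auto
  ultimately show ?thesis by simp
qed

lemma s_mono2: fixes y1 y2 :: real assumes "1/2 \<le> y1" "y1 < y2" "y2 \<le> 1"
  shows "y1 * (1 - y1) > y2 * (1 - y2)"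
  using s_mono1[of "1 - y2" "1 - y1"] assms by (simp add: mult.commute)

lemma Gd_mono1: assumes k: "odd k" "3 \<le> k" and "0 \<le> y1" "y1 < y2" "y2 \<le> 1/2"
  shows "Gd k y1 < Gd k y2"
proof -
  have "(y1 * (1 - y1)) ^ (k div 2) < (y2 * (1 - y2)) ^ (k div 2)"
    using assms by (intro power_strict_mono s_mono1) auto
  moreover have "real k * real ((k - 1) choose (k div 2)) > 0"
    using k by (auto elim!: oddE)
  ultimately show ?thesis unfolding Gd_def by (intro mult_strict_left_mono) auto
qed

lemma Gd_mono2: assumes k: "odd k" "3 \<le> k" and "1/2 \<le> y1" "y1 < y2" "y2 \<le> 1"
  shows "Gd k y1 > Gd k y2"
  using Gd_mono1[OF k, of "1 - y2" "1 - y1"] assms by (simp add: Gd_sym)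




definition Nf :: "nat \<Rightarrow> real \<Rightarrow> real" where "Nf k y = y * Gd k y - Gf k y"
definition Rf :: "nat \<Rightarrow> real \<Rightarrow> real" where "Rf k y = Gf k y / y"

lemma Gd_cont: "continuous_on A (Gd k)"
  unfolding Gd_def by (intro continuous_intros)

lemma N_cont: "continuous_on A (Nf k)"
  unfolding Nf_def by (intro continuous_intros Gd_cont G_cont)

lemma N_inc: assumes k: "odd k" "3 \<le> k" and y: "0 \<le> y1" "y1 < y2" "y2 \<le> 1/2"
  shows "Nf k y1 < Nf k y2"
proof -
  obtain z where z: "y1 < z" "z < y2" "Gf k y2 - Gf k y1 = (y2 - y1) * Gd k z"
    using MVT2[OF y(2), of "Gf k" "Gd k"] G_deriv[OF k(1)] by blast
  have a: "Gd k z < Gd k y2" using Gd_mono1[OF k, of z y2] y z by simp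
  have b: "Gd k y1 \<le> Gd k y2" using Gd_mono1[OF k, of y1 y2] y by simp
  have c: "(y2 - y1) * Gd k z < (y2 - y1) * Gd k y2" using a y by (intro mult_strict_left_mono) auto
  have d: "y1 * Gd k y1 \<le> y1 * Gd k y2" using b y by (intro mult_left_mono) auto
  have e: "(y2 - y1) * Gd k y2 = y2 * Gd k y2 - y1 * Gd k y2" by (simp add: algebra_simps)
  show ?thesis unfolding Nf_def using z(3) c d e by linarith
qed

lemma N_dec: assumes k: "odd k" "3 \<le> k" and y: "1/2 \<le> y1" "y1 < y2" "y2 \<le> 1"
  shows "Nf k y1 > Nf k y2"
proof -
  obtain z where z: "y1 < z" "z < y2" "Gf k y2 - Gf k y1 = (y2 - y1) * Gd k z"
    using MVT2[OF y(2), of "Gf k" "Gd k"] G_deriv[OF k(1)] by blast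
  have a: "Gd k z > Gd k y2" using Gd_mono2[OF k, of z y2] y z by simp
  have b: "Gd k y1 \<ge> Gd k y2" using Gd_mono2[OF k, of y1 y2] y by simp
  have c: "(y2 - y1) * Gd k z > (y2 - y1) * Gd k y2" using a y by (intro mult_strict_left_mono) auto
  have d: "y1 * Gd k y1 \<ge> y1 * Gd k y2" using b y by (intro mult_left_mono) auto
  have e: "(y2 - y1) * Gd k y2 = y2 * Gd k y2 - y1 * Gd k y2" by (simp add: algebra_simps)
  show ?thesis unfolding Nf_def using z(3) c d e by linarith
qed

lemma N0: "odd k \<Longrightarrow> Nf k 0 = 0"
  by (simp add: Nf_def G0)

lemma N1: assumes "odd k" "3 \<le> k" shows "Nf k 1 = -1"
proof -
  have "k div 2 > 0" using assms by (auto elim!: oddE)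
  then have "Gd k 1 = 0" by (simp add: Gd_def)
  then show ?thesis by (simp add: Nf_def G1[OF assms(1)])
qed

lemma N_pos_half: assumes k: "odd k" "3 \<le> k" and y: "0 < y" "y \<le> 1/2" shows "Nf k y > 0"
  using N_inc[OF k, of 0 y] y N0[OF k(1)] by simp

definition ystar :: "nat \<Rightarrow> real" where
  "ystar k = (SOME y. 1/2 < y \<and> y < 1 \<and> Nf k y = 0)"

lemma ystar: assumes k: "odd k" "3 \<le> k"
  shows "1/2 < ystar k" "ystar k < 1" "Nf k (ystar k) = 0"
proof -
  have "\<exists>y. 1/2 \<le> y \<and> y \<le> 1 \<and> Nf k y = 0"
    by (rule IVT2') (use N1[OF k] N_pos_half[OF k, of "1/2"] N_cont in auto)
  then obtain y where y: "1/2 \<le> y" "y \<le> 1" "Nf k y = 0" by blast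
  have "y \<noteq> 1/2" using N_pos_half[OF k, of "1/2"] y by (metis order.refl zero_less_divide_1_iff zero_less_numeral less_irrefl)
  moreover have "y \<noteq> 1" using N1[OF k] y by auto
  ultimately have "\<exists>y. 1/2 < y \<and> y < 1 \<and> Nf k y = 0" using y by force
  then have "1/2 < ystar k \<and> ystar k < 1 \<and> Nf k (ystar k) = 0"
    unfolding ystar_def by (rule someI_ex)
  then show "1/2 < ystar k" "ystar k < 1" "Nf k (ystar k) = 0" by auto
qed

lemma N_pos: assumes k: "odd k" "3 \<le> k" and y: "0 < y" "y < ystar k" shows "Nf k y > 0"
proof (cases "y \<le> 1/2")
  case True then show ?thesis using N_pos_half[OF k] y by simp
next
  case False then show ?thesis using N_dec[OF k, of y "ystar k"] y ystar[OF k] by simp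
qed

lemma N_neg: assumes k: "odd k" "3 \<le> k" and y: "ystar k < y" "y \<le> 1" shows "Nf k y < 0"
  using N_dec[OF k, of "ystar k" y] y ystar[OF k] by simp

lemma R_deriv: assumes "y \<noteq> 0" "odd k"
  shows "(Rf k has_real_derivative Nf k y / y\<^sup>2) (at y)"
proof -
  have "((\<lambda>y. Gf k y / y) has_real_derivative (Gd k y * y - Gf k y * 1) / (y * y)) (at y)"
    by (rule DERIV_divide[OF G_deriv[OF assms(2)] DERIV_ident assms(1)])
  then show ?thesis unfolding Rf_def[abs_def] Nf_def by (simp add: power2_eq_square mult.commute)
qed

lemma R_inc: assumes k: "odd k" "3 \<le> k" and y: "0 < a" "a < b" "b \<le> ystar k"
  shows "Rf k a < Rf k b"
proof -
  obtain z where z: "a < z" "z < b" "Rf k b - Rf k a = (b - a) * (Nf k z / z\<^sup>2)"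
    using MVT2[OF y(2), of "Rf k" "\<lambda>y. Nf k y / y\<^sup>2"] R_deriv[OF _ k(1)] y by force
  have "Nf k z > 0" using N_pos[OF k, of z] z y by simp
  then have "(b - a) * (Nf k z / z\<^sup>2) > 0" using z y by simp
  then show ?thesis using z by simp
qed

lemma R_dec: assumes k: "odd k" "3 \<le> k" and y: "ystar k \<le> a" "a < b" "b \<le> 1"
  shows "Rf k a > Rf k b"
proof -
  have a0: "0 < a" using y ystar[OF k] by simp
  obtain z where z: "a < z" "z < b" "Rf k b - Rf k a = (b - a) * (Nf k z / z\<^sup>2)"
    using MVT2[OF y(2), of "Rf k" "\<lambda>y. Nf k y / y\<^sup>2"] R_deriv[OF _ k(1)] a0 by force
  have "Nf k z < 0" using N_neg[OF k, of z] z y by simp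
  then have "(b - a) * (Nf k z / z\<^sup>2) < 0" using z y a0 by (simp add: mult_pos_neg divide_neg_pos)
  then show ?thesis using z by simp
qed

lemma R_le_max: assumes k: "odd k" "3 \<le> k" and y: "0 < y" "y \<le> 1"
  shows "Rf k y \<le> Rf k (ystar k)"
proof -
  consider "y < ystar k" | "y = ystar k" | "y > ystar k" by linarith
  then show ?thesis
    by cases (use R_inc[OF k, of y "ystar k"] R_dec[OF k, of "ystar k" y] y in auto)
qed

lemma R_cont: "0 \<notin> A \<Longrightarrow> continuous_on A (Rf k)"
  unfolding Rf_def[abs_def] by (intro continuous_intros G_cont) auto




lemma G_step: assumes k: "odd k" and y0: "1/2 \<le> y0" "y0 \<le> 1"
  shows "Gf k y0 \<le> Gf (k + 2) y0"
proof -
  define D where "D y = Gf (k + 2) y - Gf k y" for y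
  define m where "m = k div 2"
  have k2: "odd (k + 2)" using k by simp
  have m2: "(k + 2) div 2 = Suc m" using k by (auto simp: m_def elim!: oddE)
  define c where "c = real k * real ((k - 1) choose m)"
  define c' where "c' = real (k + 2) * real ((k + 2 - 1) choose Suc m)"
  have c'0: "c' \<ge> 0" by (simp add: c'_def)
  define s where "s y = y * (1 - y)" for y :: real
  have Dd: "(D has_real_derivative (s y) ^ m * (c' * s y - c)) (at y)" for y
  proof -
    have "(D has_real_derivative Gd (k + 2) y - Gd k y) (at y)"
      unfolding D_def[abs_def] by (intro derivative_intros G_deriv k k2)
    moreover have "Gd (k + 2) y - Gd k y = (s y) ^ m * (c' * s y - c)"
      unfolding Gd_def m2 m_def[symmetric] c_def c'_def s_def by (simp add: algebra_simps)
    ultimately show ?thesis by simp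
  qed
  have D1: "D 1 = 0" by (simp add: D_def G1 k k2)
  have Dh: "D (1/2) = 0" by (simp add: D_def G_half k k2)
  have s_anti: "s y \<le> s y'" if "1/2 \<le> y'" "y' \<le> y" "y \<le> 1" for y y'
    using s_mono2[of y' y] that by (cases "y' = y") (auto simp: s_def)
  have s_nn: "s y \<ge> 0" if "0 \<le> y" "y \<le> 1" for y using that by (simp add: s_def)
  show ?thesis
  proof (cases "c' * s y0 \<ge> c")
    case True
    show ?thesis
    proof (cases "y0 = 1/2")
      case True then have "D y0 = 0" using Dh by (simp only:)
      then show ?thesis by (simp add: D_def)
    next
      case False
      then have lt: "1/2 < y0" using y0 by simp
      obtain z where z: "1/2 < z" "z < y0" "D y0 - D (1/2) = (y0 - 1/2) * ((s z) ^ m * (c' * s z - c))"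
        using MVT2[OF lt, of D "\<lambda>y. (s y) ^ m * (c' * s y - c)"] Dd by blast
      have "c' * s z \<ge> c' * s y0" using s_anti[of z y0] z y0 c'0 by (intro mult_left_mono) auto
      then have "c' * s z - c \<ge> 0" using True by simp
      moreover have "(s z) ^ m \<ge> 0" using s_nn[of z] z y0 by simp
      ultimately have "(y0 - 1/2) * ((s z) ^ m * (c' * s z - c)) \<ge> 0" using lt by simp
      then show ?thesis using z Dh by (simp add: D_def)
    qed
  next
    case False
    show ?thesis
    proof (cases "y0 = 1")
      case True then have "D y0 = 0" using D1 by (simp only:)
      then show ?thesis by (simp add: D_def)
    next
      case False': False
      then have lt: "y0 < 1" using y0 by simp
      obtain z where z: "y0 < z" "z < 1" "D 1 - D y0 = (1 - y0) * ((s z) ^ m * (c' * s z - c))"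
        using MVT2[OF lt, of D "\<lambda>y. (s y) ^ m * (c' * s y - c)"] Dd by blast
      have "c' * s z \<le> c' * s y0" using s_anti[of y0 z] z y0 c'0 by (intro mult_left_mono) auto
      then have "c' * s z - c \<le> 0" using False by simp
      moreover have "(s z) ^ m \<ge> 0" using s_nn[of z] z y0 by simp
      ultimately have "(s z) ^ m * (c' * s z - c) \<le> 0" by (simp add: mult_nonneg_nonpos)
      then have "(1 - y0) * ((s z) ^ m * (c' * s z - c)) \<le> 0" using lt by (simp add: mult_nonneg_nonpos)
      then show ?thesis using z D1 by (simp add: D_def)
    qed
  qed
qed

lemma G3: "Gf 3 (3/4) = 27/32"
proof -
  have "{j. j \<le> (3::nat) \<and> 2 * j \<ge> 3 + 1} = {2, 3}" by auto
  then show ?thesis unfolding Gf_def F_def by (simp add: numeral_eq_Suc)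
qed

lemma G_34: assumes "odd k" "3 \<le> k" shows "Gf k (3/4) \<ge> 27/32"
proof -
  obtain m where km: "k = 3 + 2 * m" using assms by (metis add.commute dvd_def le_Suc_ex odd_add odd_numeral even_add even_mult_iff oddE)
  have "Gf (3 + 2 * m) (3/4) \<ge> 27/32"
  proof (induction m)
    case 0 then show ?case using G3 by simp
  next
    case (Suc m)
    have "Gf (3 + 2 * m) (3/4) \<le> Gf (3 + 2 * m + 2) (3/4)" by (intro G_step) auto
    then show ?case using Suc by simp
  qed
  then show ?thesis using km by simp
qed

lemma Rstar_ge: assumes k: "odd k" "3 \<le> k" shows "Rf k (ystar k) \<ge> 9/8"
proof -
  have "Rf k (3/4) \<ge> 9/8" using G_34[OF k] by (simp add: Rf_def)
  then show ?thesis using R_le_max[OF k, of "3/4"] by simp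
qed

lemma Rstar_lt: assumes k: "odd k" "3 \<le> k" shows "Rf k (ystar k) < 2"
proof -
  have y: "1/2 < ystar k" "ystar k < 1" using ystar[OF k] by auto
  have "Gf k (ystar k) \<le> 1" using G_range[of "ystar k" k] y by simp
  then have "Rf k (ystar k) \<le> 1 / ystar k" unfolding Rf_def using y by (simp add: divide_right_mono)
  also have "\<dots> < 2" using y by (simp add: field_simps)
  finally show ?thesis .
qed




definition Yset :: "nat \<Rightarrow> real \<Rightarrow> real set" where
  "Yset k c = {y. 0 < y \<and> y \<le> 1 \<and> Rf k y = c}"

lemma fixset_img: assumes k: "odd k" and p: "0 \<le> p" "p < 1"
  shows "fixset p k = insert 0 ((\<lambda>y. y / (1 - p)) ` Yset k (1 / (1 - p)))"
proof (intro set_eqI iffI)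
  fix x assume x: "x \<in> fixset p k"
  then have x01: "0 \<le> x" "x \<le> 1" and fx: "Gf k ((1 - p) * x) = x"
    by (auto simp: fixset_def F_G)
  show "x \<in> insert 0 ((\<lambda>y. y / (1 - p)) ` Yset k (1 / (1 - p)))"
  proof (cases "x = 0")
    case False
    then have xp: "x > 0" using x01 by simp
    let ?y = "(1 - p) * x"
    have "?y > 0" "?y \<le> 1" using xp x01 p by (auto simp: mult_le_one)
    moreover have "Rf k ?y = 1 / (1 - p)" unfolding Rf_def fx using xp p by simp
    ultimately have "?y \<in> Yset k (1 / (1 - p))" by (simp add: Yset_def)
    moreover have "x = ?y / (1 - p)" using p by simp
    ultimately show ?thesis by blast
  qed simp
next
  fix x assume "x \<in> insert 0 ((\<lambda>y. y / (1 - p)) ` Yset k (1 / (1 - p)))"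
  then consider "x = 0" | y where "y \<in> Yset k (1 / (1 - p))" "x = y / (1 - p)" by blast
  then show "x \<in> fixset p k"
  proof cases
    case 1 then show ?thesis by (simp add: fixset_def F_G G0 k)
  next
    case 2
    then have y: "0 < y" "y \<le> 1" "Gf k y / y = 1 / (1 - p)" by (auto simp: Yset_def Rf_def)
    have gy: "Gf k y = y / (1 - p)" using y p by (simp add: field_simps)
    have "(1 - p) * x = y" using 2 p by simp
    moreover have "x \<le> 1" using G_range[of y k] y gy 2 by simp
    moreover have "0 \<le> x" using 2 y p by simp
    ultimately show ?thesis unfolding fixset_def F_G using gy 2 by simp
  qed
qed

lemma R_half: "odd k \<Longrightarrow> Rf k (1/2) = 1"
  by (simp add: Rf_def G_half)

lemma R_one: "odd k \<Longrightarrow> Rf k 1 = 1"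
  by (simp add: Rf_def G1)

lemma roots_lt: assumes k: "odd k" "3 \<le> k" and c: "1 \<le> c" "c < Rf k (ystar k)"
  shows "\<exists>y1 y2. 1/2 \<le> y1 \<and> y1 < ystar k \<and> ystar k < y2 \<and> y2 \<le> 1 \<and> Yset k c = {y1, y2}"
proof -
  let ?ys = "ystar k"
  have ys: "1/2 < ?ys" "?ys < 1" using ystar[OF k] by auto
  have "\<exists>y. 1/2 \<le> y \<and> y \<le> ?ys \<and> Rf k y = c"
    by (rule IVT') (use c ys R_half[OF k(1)] in \<open>auto intro!: R_cont\<close>)
  then obtain y1 where y1: "1/2 \<le> y1" "y1 \<le> ?ys" "Rf k y1 = c" by blast
  have "\<exists>y. ?ys \<le> y \<and> y \<le> 1 \<and> Rf k y = c"
    by (rule IVT2') (use c ys R_one[OF k(1)] in \<open>auto intro!: R_cont\<close>)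
  then obtain y2 where y2: "?ys \<le> y2" "y2 \<le> 1" "Rf k y2 = c" by blast
  have y1s: "y1 < ?ys" using y1 c by (cases "y1 = ?ys") auto
  have y2s: "?ys < y2" using y2 c by (cases "y2 = ?ys") auto
  have "Yset k c = {y1, y2}"
  proof (intro set_eqI iffI)
    fix y assume "y \<in> Yset k c"
    then have y: "0 < y" "y \<le> 1" "Rf k y = c" by (auto simp: Yset_def)
    show "y \<in> {y1, y2}"
    proof (cases "y \<le> ?ys")
      case True
      have "y = y1"
      proof (rule ccontr)
        assume "y \<noteq> y1"
        then consider "y < y1" | "y1 < y" by linarith
        then show False
          by cases (use R_inc[OF k, of y y1] R_inc[OF k, of y1 y] y y1 True in auto)
      qed
      then show ?thesis by simp
    next
      case False
      have "y = y2"
      proof (rule ccontr)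
        assume "y \<noteq> y2"
        then consider "y < y2" | "y2 < y" by linarith
        then show False
          by cases (use R_dec[OF k, of y y2] R_dec[OF k, of y2 y] y y2 False in auto)
      qed
      then show ?thesis by simp
    qed
  next
    fix y assume "y \<in> {y1, y2}"
    then show "y \<in> Yset k c" using y1 y2 ys by (auto simp: Yset_def)
  qed
  then show ?thesis using y1 y1s y2 y2s by blast
qed

lemma roots_eq: assumes k: "odd k" "3 \<le> k"
  shows "Yset k (Rf k (ystar k)) = {ystar k}"
proof (intro set_eqI iffI)
  let ?ys = "ystar k"
  have ys: "1/2 < ?ys" "?ys < 1" using ystar[OF k] by auto
  fix y assume "y \<in> Yset k (Rf k ?ys)"
  then have y: "0 < y" "y \<le> 1" "Rf k y = Rf k ?ys" by (auto simp: Yset_def)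
  consider "y < ?ys" | "y = ?ys" | "?ys < y" by linarith
  then show "y \<in> {?ys}"
    by cases (use R_inc[OF k, of y ?ys] R_dec[OF k, of ?ys y] y in auto)
next
  fix y assume "y \<in> {ystar k}"
  then show "y \<in> Yset k (Rf k (ystar k))" using ystar[OF k] by (auto simp: Yset_def)
qed

lemma roots_gt: assumes k: "odd k" "3 \<le> k" and c: "c > Rf k (ystar k)"
  shows "Yset k c = {}"
  using R_le_max[OF k] c by (force simp: Yset_def)




definition psv :: "nat \<Rightarrow> real" where "psv k = 1 - 1 / Rf k (ystar k)"

lemma psv_bounds: assumes k: "odd k" "3 \<le> k" shows "1/9 \<le> psv k" "psv k < 1/2"
  using Rstar_ge[OF k] Rstar_lt[OF k] by (auto simp: psv_def field_simps)

lemma c_lt_iff: assumes k: "odd k" "3 \<le> k" and p: "p < 1"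
  shows "1 / (1 - p) < Rf k (ystar k) \<longleftrightarrow> p < psv k"
  using Rstar_ge[OF k] p by (auto simp: psv_def field_simps)

lemma c_eq_iff: assumes k: "odd k" "3 \<le> k" and p: "p < 1"
  shows "1 / (1 - p) = Rf k (ystar k) \<longleftrightarrow> p = psv k"
  using Rstar_ge[OF k] p by (auto simp: psv_def field_simps)

lemma fix_lt: assumes k: "odd k" "3 \<le> k" and p: "0 \<le> p" "p < psv k"
  shows "\<exists>y1 y2. 1/2 \<le> y1 \<and> y1 < ystar k \<and> ystar k < y2 \<and> y2 \<le> 1
     \<and> Rf k y1 = 1 / (1 - p) \<and> Rf k y2 = 1 / (1 - p)
     \<and> fixset p k = {0, y1 / (1 - p), y2 / (1 - p)}"
proof -
  have p1: "p < 1" using p psv_bounds[OF k] by simp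
  have c: "1 \<le> 1 / (1 - p)" "1 / (1 - p) < Rf k (ystar k)"
    using p p1 c_lt_iff[OF k p1] by auto
  obtain y1 y2 where y: "1/2 \<le> y1" "y1 < ystar k" "ystar k < y2" "y2 \<le> 1" "Yset k (1 / (1 - p)) = {y1, y2}"
    using roots_lt[OF k c] by blast
  have "Rf k y1 = 1 / (1 - p)" "Rf k y2 = 1 / (1 - p)"
    using y(5) by (auto simp: Yset_def set_eq_iff)
  moreover have "fixset p k = {0, y1 / (1 - p), y2 / (1 - p)}"
    using fixset_img[OF k(1) p(1) p1] y(5) by simp
  ultimately show ?thesis using y by blast
qed

lemma card_lt: assumes k: "odd k" "3 \<le> k" and p: "0 \<le> p" "p < psv k"
  shows "card (fixset p k) = 3"
proof -
  obtain y1 y2 where y: "1/2 \<le> y1" "y1 < ystar k" "ystar k < y2" "y2 \<le> 1"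
     "fixset p k = {0, y1 / (1 - p), y2 / (1 - p)}"
    using fix_lt[OF k p] by blast
  have p1: "p < 1" using p psv_bounds[OF k] by simp
  have "0 < y1 / (1 - p)" using y p1 by simp
  moreover have "y1 / (1 - p) < y2 / (1 - p)" using y p1 by (simp add: divide_strict_right_mono)
  ultimately show ?thesis using y p1 by (simp add: card_insert_if)
qed

lemma fix_eq: assumes k: "odd k" "3 \<le> k"
  shows "fixset (psv k) k = {0, ystar k / (1 - psv k)}"
proof -
  have p: "0 \<le> psv k" "psv k < 1" using psv_bounds[OF k] by auto
  have "1 / (1 - psv k) = Rf k (ystar k)" using c_eq_iff[OF k p(2)] by simp
  then show ?thesis using fixset_img[OF k(1) p] roots_eq[OF k] by simp
qed

lemma card_eq: assumes k: "odd k" "3 \<le> k" shows "card (fixset (psv k) k) = 2"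
proof -
  have "ystar k / (1 - psv k) \<noteq> 0" using ystar[OF k] psv_bounds[OF k] by simp
  then show ?thesis using fix_eq[OF k] by simp
qed

lemma fix_gt: assumes k: "odd k" "3 \<le> k" and p: "psv k < p" "p \<le> 1"
  shows "fixset p k = {0}"
proof (cases "p = 1")
  case True
  then show ?thesis by (auto simp: fixset_def F_G G0 k)
next
  case False
  then have p1: "p < 1" using p by simp
  have p0: "0 \<le> p" using p psv_bounds[OF k] by simp
  have "\<not> 1 / (1 - p) < Rf k (ystar k)" "1 / (1 - p) \<noteq> Rf k (ystar k)"
    using c_lt_iff[OF k p1] c_eq_iff[OF k p1] p by auto
  then have "1 / (1 - p) > Rf k (ystar k)" by linarith
  then show ?thesis using fixset_img[OF k(1) p0 p1] roots_gt[OF k] by simp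
qed

lemma pk_star_eq: assumes k: "odd k" "3 \<le> k" shows "pk_star k = psv k"
  unfolding pk_star_def
proof (rule the_equality)
  show "1/9 \<le> psv k \<and> psv k < 1/2
      \<and> (\<forall>p. 0 \<le> p \<and> p < psv k \<longrightarrow> card (fixset p k) = 3)
      \<and> card (fixset (psv k) k) = 2
      \<and> (\<forall>p. psv k < p \<and> p \<le> 1 \<longrightarrow> fixset p k = {0})"
    using psv_bounds[OF k] card_lt[OF k] card_eq[OF k] fix_gt[OF k] by auto
next
  fix ps assume h: "1/9 \<le> ps \<and> ps < 1/2
      \<and> (\<forall>p. 0 \<le> p \<and> p < ps \<longrightarrow> card (fixset p k) = 3)
      \<and> card (fixset ps k) = 2
      \<and> (\<forall>p. ps < p \<and> p \<le> 1 \<longrightarrow> fixset p k = {0})"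
  show "ps = psv k"
  proof (rule ccontr)
    assume "ps \<noteq> psv k"
    then consider "ps < psv k" | "psv k < ps" by linarith
    then show False
    proof cases
      case 1
      then have "card (fixset ps k) = 3" using card_lt[OF k, of ps] h by auto
      then show False using h by simp
    next
      case 2
      then have "card (fixset (psv k) k) = 3" using h psv_bounds[OF k] by auto
      then show False using card_eq[OF k] by simp
    qed
  qed
qed




lemma phim_lt: assumes k: "odd k" "3 \<le> k" and p: "0 \<le> p" "p < psv k"
  shows "\<exists>y1 y2. 1/2 \<le> y1 \<and> y1 < ystar k \<and> ystar k < y2 \<and> y2 \<le> 1
     \<and> Rf k y1 = 1 / (1 - p) \<and> Rf k y2 = 1 / (1 - p)
     \<and> fixset p k = {0, y1 / (1 - p), y2 / (1 - p)}
     \<and> phi_minus p k = y1 / (1 - p) \<and> phi_plus p k = y2 / (1 - p)"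
proof -
  obtain y1 y2 where y: "1/2 \<le> y1" "y1 < ystar k" "ystar k < y2" "y2 \<le> 1"
     "Rf k y1 = 1 / (1 - p)" "Rf k y2 = 1 / (1 - p)" "fixset p k = {0, y1 / (1 - p), y2 / (1 - p)}"
    using fix_lt[OF k p] by blast
  have p1: "p < 1" using p psv_bounds[OF k] by simp
  have a: "0 < y1 / (1 - p)" using y p1 by simp
  have b: "y1 / (1 - p) < y2 / (1 - p)" using y p1 by (simp add: divide_strict_right_mono)
  have "fixset p k - {0} = {y1 / (1 - p), y2 / (1 - p)}" using y(7) a b by auto
  then have "phi_minus p k = y1 / (1 - p)" using a b by (simp add: phi_minus_def)
  moreover have "phi_plus p k = y2 / (1 - p)" using y(7) a b by (simp add: phi_plus_def)
  ultimately show ?thesis using y by blast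
qed

lemma phim_eq: assumes k: "odd k" "3 \<le> k"
  shows "phi_minus (psv k) k = ystar k / (1 - psv k)"
proof -
  have "ystar k / (1 - psv k) \<noteq> 0" using ystar[OF k] psv_bounds[OF k] by simp
  then have "fixset (psv k) k - {0} = {ystar k / (1 - psv k)}" using fix_eq[OF k] by auto
  then show ?thesis by (simp add: phi_minus_def)
qed

lemma phim_cond: assumes k: "odd k" "3 \<le> k" and q: "1/2 < q" "q \<le> 1" and p: "0 \<le> p" "p \<le> psv k"
  shows "phi_minus p k \<le> q \<longleftrightarrow> (q \<le> F p k q \<or> ystar k \<le> (1 - p) * q)"
proof -
  have p1: "p < 1" using p psv_bounds[OF k] by simp
  define z where "z = (1 - p) * q"
  have z0: "z > 0" using p1 q by (simp add: z_def)
  have Fz: "F p k q = Gf k z" by (simp add: F_G z_def)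
  have ys: "1/2 < ystar k" "ystar k < 1" using ystar[OF k] by auto
  show ?thesis
  proof (cases "p = psv k")
    case True
    have "phi_minus p k \<le> q \<longleftrightarrow> ystar k / (1 - p) \<le> q"
      using True phim_eq[OF k] by simp
    also have "\<dots> \<longleftrightarrow> ystar k \<le> z"
      using p1 by (simp add: z_def pos_divide_le_eq mult.commute)
    finally have "phi_minus p k \<le> q \<longleftrightarrow> ystar k \<le> z" .
    moreover have "\<not> q \<le> F p k q" if "z < ystar k"
    proof -
      have "Rf k z < Rf k (ystar k)" using R_inc[OF k z0 that] by simp
      also have "Rf k (ystar k) = 1 / (1 - p)" using c_eq_iff[OF k p1] True by simp
      finally have "Gf k z < z / (1 - p)" using z0 p1 by (simp add: Rf_def field_simps)
      then show ?thesis using Fz p1 by (simp add: z_def)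
    qed
    ultimately show ?thesis unfolding z_def by force
  next
    case False
    then have pl: "p < psv k" using p by simp
    obtain y1 where y1: "1/2 \<le> y1" "y1 < ystar k" "Rf k y1 = 1 / (1 - p)" "phi_minus p k = y1 / (1 - p)"
      using phim_lt[OF k p(1) pl] by blast
    have e1: "phi_minus p k \<le> q \<longleftrightarrow> y1 \<le> z" using y1(4) p1 by (simp add: z_def pos_divide_le_eq mult.commute)
    show ?thesis
    proof (cases "ystar k \<le> z")
      case True then show ?thesis using e1 y1 by (simp add: z_def)
    next
      case zl: False
      have "y1 \<le> z \<longleftrightarrow> Rf k y1 \<le> Rf k z"
      proof
        assume "y1 \<le> z" then show "Rf k y1 \<le> Rf k z"
          using R_inc[OF k, of y1 z] y1 zl by (cases "y1 = z") auto
      next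
        assume "Rf k y1 \<le> Rf k z" then show "y1 \<le> z"
          using R_inc[OF k, of z y1] y1 zl z0 by (cases "z < y1") auto
      qed
      also have "\<dots> \<longleftrightarrow> 1 / (1 - p) \<le> Gf k z / z" using y1(3) by (simp add: Rf_def)
      also have "\<dots> \<longleftrightarrow> z / (1 - p) \<le> Gf k z" using z0 by (simp add: pos_le_divide_eq)
      also have "z / (1 - p) = q" using p1 by (simp add: z_def)
      also have "q \<le> Gf k z \<longleftrightarrow> q \<le> F p k q" using Fz by simp
      finally show ?thesis using e1 zl by (simp add: z_def)
    qed
  qed
qed

lemma pkq_lt: assumes k: "odd k" "3 \<le> k" and q: "1/2 < q" "q \<le> 1" and p: "p < pkq_star k q"
  shows "p < psv k"
proof -
  define S where "S = {p. 0 \<le> p \<and> p \<le> psv k \<and> (q \<le> F p k q \<or> ystar k \<le> (1 - p) * q)}"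
  have P: "(0 \<le> p \<and> p \<le> pk_star k \<and> phi_minus p k \<le> q) \<longleftrightarrow> p \<in> S" for p
    using phim_cond[OF k q, of p] pk_star_eq[OF k] by (auto simp: S_def)
  have Fc: "continuous_on UNIV (\<lambda>p. F p k q)" unfolding F_def by (intro continuous_intros)
  have cl: "closed S" unfolding S_def
    by (intro closed_Collect_conj closed_Collect_disj closed_Collect_le continuous_intros
          continuous_on_subset[OF Fc]) auto
  have bdd: "bdd_above S" by (auto simp: S_def bdd_above_def)
  have "0 \<in> S"
  proof -
    have "q \<le> F 0 k q \<or> ystar k \<le> q"
    proof (cases "ystar k \<le> q")
      case False
      have "Rf k (1/2) < Rf k q" using R_inc[OF k, of "1/2" q] q False by simp
      then have "q < Gf k q" using R_half[OF k(1)] q by (simp add: Rf_def field_simps)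
      then show ?thesis by (simp add: F_G)
    qed simp
    then show ?thesis using psv_bounds[OF k] by (simp add: S_def)
  qed
  then have ne: "S \<noteq> {}" by blast
  have inS: "Sup S \<in> S" by (rule closed_contains_Sup[OF ne bdd cl])
  have "pkq_star k q = Sup S"
    unfolding pkq_star_def
  proof (rule Greatest_equality)
    show "0 \<le> Sup S \<and> Sup S \<le> pk_star k \<and> phi_minus (Sup S) k \<le> q" using P inS by blast
    fix y assume "0 \<le> y \<and> y \<le> pk_star k \<and> phi_minus y k \<le> q"
    then have "y \<in> S" using P by blast
    then show "y \<le> Sup S" by (rule cSup_upper[OF _ bdd])
  qed
  then show ?thesis using p inS by (auto simp: S_def)
qed




lemma F_deriv: assumes k: "odd k"
  shows "(F p k has_real_derivative (1 - p) * Gd k ((1 - p) * x)) (at x)"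
proof -
  have "((\<lambda>x. Gf k ((1 - p) * x)) has_real_derivative Gd k ((1 - p) * x) * (1 - p)) (at x)"
    by (rule DERIV_chain2[OF G_deriv[OF k]]) (auto intro!: derivative_eq_intros)
  then show ?thesis unfolding F_G[abs_def] by (simp add: mult.commute)
qed

lemma main_analysis:
  assumes k: "odd k" "3 \<le> k" and p: "0 \<le> p" "p < psv k"
    and qr: "phi_minus p k < q" "q \<le> mu p k"
  shows "\<exists>T. q_seq p k q T > mu p k"
proof -
  obtain y1 y2 where y: "1/2 \<le> y1" "y1 < ystar k" "ystar k < y2" "y2 \<le> 1"
     "Rf k y1 = 1 / (1 - p)" "Rf k y2 = 1 / (1 - p)"
     "fixset p k = {0, y1 / (1 - p), y2 / (1 - p)}"
     "phi_minus p k = y1 / (1 - p)" "phi_plus p k = y2 / (1 - p)"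
    using phim_lt[OF k p] by blast
  have p1: "p < 1" using p psv_bounds[OF k] by simp
  define x1 where "x1 = y1 / (1 - p)"
  define x2 where "x2 = y2 / (1 - p)"
  have x1p: "0 < x1" using y p1 by (simp add: x1_def)
  have x12: "x1 < x2" using y p1 by (simp add: x1_def x2_def divide_strict_right_mono)
  have x2le: "x2 \<le> 1" using y(7) fixset_def[of p k] by (auto simp: x2_def)
  have Fx1: "F p k x1 = x1" using y(7) by (auto simp: fixset_def x1_def)
  have Fx2: "F p k x2 = x2" using y(7) by (auto simp: fixset_def x2_def)
  let ?F' = "\<lambda>x. (1 - p) * Gd k ((1 - p) * x)"
  have dF: "deriv (F p k) x = ?F' x" for x by (rule DERIV_imp_deriv[OF F_deriv[OF k(1)]])
  have above: "F p k x > x" if x: "x1 < x" "x < x2" for x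
  proof -
    let ?y = "(1 - p) * x"
    have yy: "y1 < ?y" "?y < y2" using x p1 by (auto simp: x1_def x2_def field_simps)
    have "Rf k ?y > 1 / (1 - p)"
    proof (cases "?y \<le> ystar k")
      case True then show ?thesis using R_inc[OF k, of y1 ?y] y yy by simp
    next
      case False then show ?thesis using R_dec[OF k, of ?y y2] y yy by simp
    qed
    moreover have "?y > 0" using yy y by simp
    ultimately have "Gf k ?y > ?y / (1 - p)" by (simp add: Rf_def pos_less_divide_eq field_simps)
    then show ?thesis using p1 by (simp add: F_G)
  qed
  have ex: "\<exists>z. x1 < z \<and> z < x2 \<and> deriv (F p k) z = 1"
  proof -
    obtain z where z: "x1 < z" "z < x2" "F p k x2 - F p k x1 = (x2 - x1) * ?F' z"
      using MVT2[OF x12, of "F p k" ?F'] F_deriv[OF k(1)] by blast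
    then have "?F' z = 1" using Fx1 Fx2 x12 by simp
    then show ?thesis using z dF by auto
  qed
  have uniq: "z1 = z2" if z1: "x1 < z1" "z1 < x2" "deriv (F p k) z1 = 1"
      and z2: "x1 < z2" "z2 < x2" "deriv (F p k) z2 = 1" for z1 z2
  proof (rule ccontr)
    have main: False if a: "x1 < a" "a < b" "b < x2" "?F' a = 1" "?F' b = 1" for a b
    proof -
      have u: "0 < (1 - p) * a" "(1 - p) * a < (1 - p) * b" "(1 - p) * b \<le> 1"
      proof -
        show "0 < (1 - p) * a" using a x1p p1 by simp
        show "(1 - p) * a < (1 - p) * b" using a p1 by simp
        have "b \<le> 1" using a x2le by simp
        then show "(1 - p) * b \<le> 1" using p p1 a x1p by (intro mult_le_one) auto
      qed
      have ua: "(1 - p) * a \<le> 1/2"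
      proof (rule ccontr)
        assume "\<not> ?thesis"
        then have "Gd k ((1 - p) * a) > Gd k ((1 - p) * b)" using Gd_mono2[OF k] u by simp
        moreover have "Gd k ((1 - p) * a) = Gd k ((1 - p) * b)"
        proof -
          have "(1 - p) * Gd k ((1 - p) * a) = (1 - p) * Gd k ((1 - p) * b)" using a by simp
          then show ?thesis using p1 by simp
        qed
        ultimately show False by simp
      qed
      obtain e where e: "0 < e" "e < x1" "F p k x1 - F p k 0 = (x1 - 0) * ?F' e"
        using MVT2[OF x1p, of "F p k" ?F'] F_deriv[OF k(1)] by blast
      have "(1 - p) * e < (1 - p) * a" using e a p1 by simp
      then have "Gd k ((1 - p) * e) < Gd k ((1 - p) * a)" using Gd_mono1[OF k] ua e p1 by simp
      then have "(1 - p) * Gd k ((1 - p) * e) < (1 - p) * Gd k ((1 - p) * a)" using p1 by simp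
      then have "?F' e < 1" using a by simp
      moreover have "F p k 0 = 0" by (simp add: F_G G0 k)
      ultimately have "F p k x1 < x1" using e x1p by (simp add: mult_less_cancel_left2)
      then show False using Fx1 by simp
    qed
    assume "z1 \<noteq> z2"
    then consider "z1 < z2" | "z2 < z1" by linarith
    then show False
      by cases (use main[of z1 z2] main[of z2 z1] z1 z2 dF in auto)
  qed
  have mu: "x1 < mu p k" "mu p k < x2"
  proof -
    have "x1 < mu p k \<and> mu p k < x2 \<and> deriv (F p k) (mu p k) = 1"
      unfolding mu_def y(8) y(9) x1_def[symmetric] x2_def[symmetric]
      by (rule theI') (use ex uniq in blast)
    then show "x1 < mu p k" "mu p k < x2" by auto
  qed
  show ?thesis
  proof (rule ccontr)
    assume "\<not> ?thesis"
    then have le: "q_seq p k q t \<le> mu p k" for t by (simp add: not_less)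
    have gt: "x1 < q_seq p k q t" for t
    proof (induction t)
      case 0 then show ?case using qr y by (simp add: q_seq_0 x1_def)
    next
      case (Suc t)
      have "q_seq p k q t < x2" using le[of t] mu by simp
      then show ?case using above[OF Suc] Suc by (simp add: q_seq_Suc)
    qed
    have step: "q_seq p k q t < q_seq p k q (Suc t)" for t
      using above[OF gt[of t]] le[of t] mu by (simp add: q_seq_Suc)
    have inc: "incseq (q_seq p k q)" by (rule incseq_SucI) (use step less_imp_le in blast)
    have bdd: "bdd_above (range (q_seq p k q))" using le by (auto simp: bdd_above_def)
    define L where "L = (SUP t. q_seq p k q t)"
    have lim: "q_seq p k q \<longlonglongrightarrow> L" unfolding L_def by (rule LIMSEQ_incseq_SUP[OF bdd inc])
    have L1: "x1 < L" using gt[of 0] cSUP_upper[OF _ bdd, of 0] by (simp add: L_def)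
    have L2: "L \<le> mu p k" unfolding L_def by (rule cSUP_least) (use le in auto)
    have "(\<lambda>t. F p k (q_seq p k q t)) \<longlonglongrightarrow> F p k L"
      by (rule isCont_tendsto_compose[OF _ lim]) (use F_cont[of UNIV p k] in \<open>simp add: continuous_on_eq_continuous_at\<close>)
    moreover have "(\<lambda>t. F p k (q_seq p k q t)) \<longlonglongrightarrow> L"
      using LIMSEQ_Suc[OF lim] by (simp add: q_seq_Suc)
    ultimately have "F p k L = L" by (rule LIMSEQ_unique)
    moreover have "F p k L > L" using above[OF L1] L2 mu by simp
    ultimately show False by simp
  qed
qed


theorem proposition5p12:
  fixes G :: "nat \<Rightarrow> nat \<Rightarrow> nat \<Rightarrow> bool" and k :: nat and p q :: real
  assumes graph: "\<And>n u v. G n u v \<Longrightarrow> u \<in> {1..n} \<and> v \<in> {1..n} \<and> u \<noteq> v \<and> G n v u"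
    and mindeg: "(\<lambda>n. real (Min ((\<lambda>v. card (nbhd G n v)) ` {1..n}))) \<in> \<omega>(\<lambda>n. ln (real n))"
    and k: "odd k" "3 \<le> k"
    and q: "1/2 < q" "q \<le> 1"
    and p: "0 \<le> p" "p < pkq_star k q"
    and qrange: "phi_minus p k < q" "q \<le> mu p k"
  shows "\<exists>T. q_seq p k q T > mu p k \<and>
           (\<forall>\<gamma>>0. \<exists>h. h \<in> \<omega>(\<lambda>n. ln (real n)) \<and>
              (\<forall>\<^sub>F n in at_top.
                 measure_pmf.prob (traj (nbhd G n) {1..n} k p q T)
                   {cs. \<forall>t\<le>T. \<forall>v\<in>{1..n}.
                          q_seq p k q t - \<gamma> \<le> phi (nbhd G n v) (cs ! t) \<and>
                          phi (nbhd G n v) (cs ! t) \<le> q_seq p k q t + \<gamma>}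
                 \<ge> 1 - exp (- h n)))"
proof -
  have pl: "p < psv k" by (rule pkq_lt[OF k q p(2)])
  have p1: "p \<le> 1" using pl psv_bounds[OF k] by simp
  obtain T where T: "q_seq p k q T > mu p k" using main_analysis[OF k p(1) pl qrange] by blast
  have q0: "0 \<le> q" using q by simp
  show ?thesis
    using T conc_main[OF mindeg p(1) p1 q0 q(2)] by blast
qed

end
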